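(* At points $(\tau,\eta)\in\Sigma$: if $a_{12}=0$, then $\partial_\gamma a_{12}\neq0$ and $\partial_\gamma a_{21}\neq0$; if $a_{21}=0$, then $\partial_\gamma a_{12}\neq0$ and $\partial_\gamma a_{21}\neq0$; if $a_{34}=0$, then $\partial_\gamma a_{34}\neq0$.
   Context: Constants of a basic state: $\dot v\neq0$, $\dot\rho>0$, $\dot H\neq0$, $\dot\alpha>0$ with $\dot\alpha\dot H^2\neq1$; $\varepsilon>0$ a parameter. Write $\tau=\gamma+i\delta$, $\Sigma=\{(\tau,\eta)\in\mathbb C\times\mathbb R:|\tau|^2+\eta^2=1,\ \gamma\ge0\}$, $\mu=\tau+i\dot v\eta$, and \[ a_{12}=-\frac{\mu^2\dot\rho+\eta^2\dot H^2}{\mu},\quad a_{21}=-\frac{\mu(\dot\alpha\dot\rho\mu^2+\eta^2)}{(\mu^2\dot\rho\dot\alpha+\eta^2)\dot H^2+\mu^2\dot\rho},\quad a_{34}=-\frac{\varepsilon^2\tau^2+\eta^2}{\varepsilon\tau}, \] considered at points where they are defined; $\partial_\gamma$ denotes the partial derivative in $\gamma$ with $\delta,\eta$ fixed. *)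

theory Defs
  imports "HOL-Analysis.Analysis"
begin

text \<open>Basic-state constants v, rho, H, alpha (reals) and the parameter eps.
  The point is tau = gamma + i delta (complex), eta real.\<close>

definition mu :: "real \<Rightarrow> complex \<Rightarrow> real \<Rightarrow> complex" where
  "mu v tau eta = tau + \<i> * complex_of_real (v * eta)"

definition a12 :: "real \<Rightarrow> real \<Rightarrow> real \<Rightarrow> complex \<Rightarrow> real \<Rightarrow> complex" where
  "a12 v rho H tau eta =
     - ((mu v tau eta)\<^sup>2 * complex_of_real rho + complex_of_real (eta\<^sup>2 * H\<^sup>2)) / mu v tau eta"

definition a21_den :: "real \<Rightarrow> real \<Rightarrow> real \<Rightarrow> real \<Rightarrow> complex \<Rightarrow> real \<Rightarrow> complex" where
  "a21_den v rho H alpha tau eta =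
     ((mu v tau eta)\<^sup>2 * complex_of_real (rho * alpha) + complex_of_real (eta\<^sup>2)) * complex_of_real (H\<^sup>2)
     + (mu v tau eta)\<^sup>2 * complex_of_real rho"

definition a21 :: "real \<Rightarrow> real \<Rightarrow> real \<Rightarrow> real \<Rightarrow> complex \<Rightarrow> real \<Rightarrow> complex" where
  "a21 v rho H alpha tau eta =
     - (mu v tau eta * (complex_of_real (alpha * rho) * (mu v tau eta)\<^sup>2 + complex_of_real (eta\<^sup>2)))
       / a21_den v rho H alpha tau eta"

definition a34 :: "real \<Rightarrow> complex \<Rightarrow> real \<Rightarrow> complex" where
  "a34 eps tau eta =
     - (complex_of_real (eps\<^sup>2) * tau\<^sup>2 + complex_of_real (eta\<^sup>2)) / (complex_of_real eps * tau)"

definition in_Sigma :: "real \<Rightarrow> real \<Rightarrow> real \<Rightarrow> bool" where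
  "in_Sigma g d eta \<longleftrightarrow> g\<^sup>2 + d\<^sup>2 + eta\<^sup>2 = 1 \<and> g \<ge> 0"

definition dgamma_nonzero :: "(real \<Rightarrow> complex) \<Rightarrow> real \<Rightarrow> bool" where
  "dgamma_nonzero f g \<longleftrightarrow> (\<exists>D. (f has_vector_derivative D) (at g) \<and> D \<noteq> 0)"

end

theory Submission imports Defs begin

lemma chain: assumes "(f has_field_derivative D) (at (Complex g d))"
  shows "((\<lambda>x. f (Complex x d)) has_vector_derivative D) (at g)"
proof -
  have e: "(\<lambda>x. Complex x d) = (\<lambda>x. of_real x + \<i> * of_real d)"
    by (auto simp: complex_eq_iff)
  have "((\<lambda>x. Complex x d) has_vector_derivative 1) (at g)"
    unfolding e by (auto intro!: derivative_eq_intros)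
  from field_vector_diff_chain_at[OF this, of f D] assms show ?thesis by (simp add: o_def)
qed

lemma d12: assumes "mu v t eta \<noteq> 0"
  shows "((\<lambda>t. a12 v rho H t eta) has_field_derivative
     -(2 * (mu v t eta)^2 * of_real rho - ((mu v t eta)\<^sup>2 * of_real rho + of_real (eta\<^sup>2 * H\<^sup>2))) / (mu v t eta)\<^sup>2) (at t)"
  unfolding a12_def mu_def
  using assms unfolding mu_def
  by (auto intro!: derivative_eq_intros simp: power2_eq_square field_simps)

lemma d21: assumes "mu v t eta \<noteq> 0" "a21_den v rho H alpha t eta \<noteq> 0"
  shows "((\<lambda>t. a21 v rho H alpha t eta) has_field_derivative
     -((3* of_real (alpha*rho)*(mu v t eta)^2 + of_real (eta^2)) * a21_den v rho H alpha t eta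
       - 2 * (mu v t eta)^2 * (of_real (alpha*rho)*(mu v t eta)^2 + of_real (eta^2)) * of_real (rho*alpha*H^2 + rho))
      / (a21_den v rho H alpha t eta)\<^sup>2) (at t)"
  using assms unfolding a21_def a21_den_def mu_def
  by (auto intro!: derivative_eq_intros simp: power2_eq_square field_simps)

lemma d34: assumes "t \<noteq> 0" "eps > 0"
  shows "((\<lambda>t. a34 eps t eta) has_field_derivative
     -(of_real eps - of_real (eta^2) / (of_real eps * t^2))) (at t)"
  using assms unfolding a34_def
  by (auto intro!: derivative_eq_intros simp: power2_eq_square field_simps)
theorem lemma7p5:
  fixes v rho H alpha eps g d eta :: real
  assumes "v \<noteq> 0" "rho > 0" "H \<noteq> 0" "alpha > 0" "alpha * H\<^sup>2 \<noteq> 1" "eps > 0"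
    and "in_Sigma g d eta"
  shows
    "(mu v (Complex g d) eta \<noteq> 0 \<and> a12 v rho H (Complex g d) eta = 0 \<longrightarrow>
        dgamma_nonzero (\<lambda>x. a12 v rho H (Complex x d) eta) g \<and>
        dgamma_nonzero (\<lambda>x. a21 v rho H alpha (Complex x d) eta) g)
   \<and> (mu v (Complex g d) eta \<noteq> 0 \<and> a21_den v rho H alpha (Complex g d) eta \<noteq> 0 \<and>
        a21 v rho H alpha (Complex g d) eta = 0 \<longrightarrow>
        dgamma_nonzero (\<lambda>x. a12 v rho H (Complex x d) eta) g \<and>
        dgamma_nonzero (\<lambda>x. a21 v rho H alpha (Complex x d) eta) g)
   \<and> (Complex g d \<noteq> 0 \<and> a34 eps (Complex g d) eta = 0 \<longrightarrow>
        dgamma_nonzero (\<lambda>x. a34 eps (Complex x d) eta) g)"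
proof (intro conjI impI; elim conjE)
  let ?t = "Complex g d"
  let ?m = "mu v ?t eta"
  let ?den = "a21_den v rho H alpha ?t eta"
  have rho0: "complex_of_real rho \<noteq> 0" using assms by simp
  {
    assume m0: "?m \<noteq> 0" and z: "a12 v rho H ?t eta = 0"
    have s: "?m\<^sup>2 = - of_real (eta\<^sup>2 * H\<^sup>2 / rho)"
    proof -
      have "- (complex_of_real rho * ?m\<^sup>2) = of_real (eta\<^sup>2 * H\<^sup>2)"
        using z m0 rho0 unfolding a12_def by (simp add: field_simps)
      then show ?thesis using rho0 by (simp add: field_simps) (metis add.inverse_inverse)
    qed
    have eta0: "eta \<noteq> 0" using s m0 by auto
    have den: "?den = of_real (alpha * rho * H^2) * ?m\<^sup>2"
      unfolding a21_den_def s using rho0 by (simp add: field_simps)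
    have den0: "?den \<noteq> 0" unfolding den using m0 assms by simp
    show "dgamma_nonzero (\<lambda>x. a12 v rho H (Complex x d) eta) g"
      unfolding dgamma_nonzero_def
    proof (rule exI, rule conjI[OF chain[OF d12[OF m0]]])
      show "- (2 * ?m^2 * of_real rho - (?m\<^sup>2 * of_real rho + of_real (eta\<^sup>2 * H\<^sup>2))) / ?m\<^sup>2 \<noteq> 0"
        unfolding s using eta0 rho0 assms by (simp add: field_simps power2_eq_square)
    qed
    show "dgamma_nonzero (\<lambda>x. a21 v rho H alpha (Complex x d) eta) g"
      unfolding dgamma_nonzero_def
    proof (rule exI, rule conjI[OF chain[OF d21[OF m0 den0]]])
      have E: "(3* of_real (alpha*rho)*?m^2 + of_real (eta^2)) * ?den
       - 2 * ?m^2 * (of_real (alpha*rho)*?m^2 + of_real (eta^2)) * of_real (rho*alpha*H^2 + rho)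
        = of_real (eta^4 * H^2 * ((alpha*H^2)^2 - alpha*H^2 + 2))"
        unfolding den s using rho0 by (simp add: field_simps power2_eq_square power4_eq_xxxx)
      have P: "(alpha*H^2)^2 - alpha*H^2 + 2 > 0"
      proof -
        have "0 \<le> (alpha*H^2 - 1/2)^2" by simp
        also have "(alpha*H^2 - 1/2)^2 = (alpha*H^2)^2 - alpha*H^2 + 1/4"
          by (simp add: power2_eq_square algebra_simps)
        finally show ?thesis by linarith
      qed
      have nz: "eta^4 * H^2 * ((alpha*H^2)^2 - alpha*H^2 + 2) \<noteq> 0"
        using P eta0 assms by simp
      then have nz': "complex_of_real (eta^4 * H^2 * ((alpha*H^2)^2 - alpha*H^2 + 2)) \<noteq> 0"
        using of_real_eq_0_iff by blast
      show "-((3* of_real (alpha*rho)*?m^2 + of_real (eta^2)) * ?den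
       - 2 * ?m^2 * (of_real (alpha*rho)*?m^2 + of_real (eta^2)) * of_real (rho*alpha*H^2 + rho))
      / ?den\<^sup>2 \<noteq> 0"
        unfolding E using den0 nz' by (simp only: divide_eq_0_iff neg_equal_0_iff_equal power_eq_0_iff de_Morgan_disj) simp
    qed
  }
  {
    assume m0: "?m \<noteq> 0" and den0: "?den \<noteq> 0" and z: "a21 v rho H alpha ?t eta = 0"
    have k: "of_real (alpha*rho) * ?m\<^sup>2 + of_real (eta\<^sup>2) = 0"
      using z m0 den0 unfolding a21_def by simp
    have s: "?m\<^sup>2 = - of_real (eta\<^sup>2 / (alpha * rho))"
      using k assms by (simp add: field_simps) (metis add.commute add_eq_0_iff)
    have eta0: "eta \<noteq> 0" using s m0 by auto
    show "dgamma_nonzero (\<lambda>x. a12 v rho H (Complex x d) eta) g"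
      unfolding dgamma_nonzero_def
    proof (rule exI, rule conjI[OF chain[OF d12[OF m0]]])
      have "- (2 * ?m^2 * of_real rho - (?m\<^sup>2 * of_real rho + of_real (eta\<^sup>2 * H\<^sup>2))) / ?m\<^sup>2
          = - of_real (rho * (1 + alpha * H^2))"
        unfolding s using assms eta0 by (simp add: field_simps power2_eq_square)
      moreover have "rho * (1 + alpha * H^2) > 0" using assms by (simp add: add_pos_nonneg)
      then have "complex_of_real (rho * (1 + alpha * H^2)) \<noteq> 0"
        using of_real_eq_0_iff by (metis less_irrefl)
      ultimately show "- (2 * ?m^2 * of_real rho - (?m\<^sup>2 * of_real rho + of_real (eta\<^sup>2 * H\<^sup>2))) / ?m\<^sup>2 \<noteq> 0"
        by (metis neg_equal_0_iff_equal)
    qed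
    show "dgamma_nonzero (\<lambda>x. a21 v rho H alpha (Complex x d) eta) g"
      unfolding dgamma_nonzero_def
    proof (rule exI, rule conjI[OF chain[OF d21[OF m0 den0]]])
      have "(3* of_real (alpha*rho)*?m^2 + of_real (eta^2)) * ?den
       - 2 * ?m^2 * (of_real (alpha*rho)*?m^2 + of_real (eta^2)) * of_real (rho*alpha*H^2 + rho)
        = - 2 * of_real (eta^2) * ?den"
        unfolding s using assms by (simp add: field_simps power2_eq_square)
      then show "-((3* of_real (alpha*rho)*?m^2 + of_real (eta^2)) * ?den
       - 2 * ?m^2 * (of_real (alpha*rho)*?m^2 + of_real (eta^2)) * of_real (rho*alpha*H^2 + rho))
      / ?den\<^sup>2 \<noteq> 0"
        using den0 eta0 by simp
    qed
  }
  {
    assume t0: "?t \<noteq> 0" and z: "a34 eps ?t eta = 0"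
    have s: "?t\<^sup>2 = - of_real (eta\<^sup>2 / eps^2)"
      using z t0 assms unfolding a34_def by (simp add: field_simps)
    show "dgamma_nonzero (\<lambda>x. a34 eps (Complex x d) eta) g"
      unfolding dgamma_nonzero_def
    proof (rule exI, rule conjI[OF chain[OF d34[OF t0 assms(6)]]])
      have eta0: "eta \<noteq> 0" using s t0 by auto
      have "-(of_real eps - of_real (eta^2) / (of_real eps * ?t^2)) = - of_real (2*eps)"
        unfolding s using assms eta0 by (simp add: field_simps power2_eq_square)
      moreover have "complex_of_real (2*eps) \<noteq> 0" using assms by simp
      ultimately show "-(of_real eps - of_real (eta^2) / (of_real eps * ?t^2)) \<noteq> 0"
        by (metis neg_equal_0_iff_equal)
    qed
  }
qed

end
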